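(* Let $A\in\mathbb{R}^{n\times n}$ be a positive weighted circuit matrix with $k\ge 2$ weights $c_1,\dots,c_k>0$. Let $A'$ be obtained from $A$ by setting one or more, but not all, of the weights $c_j$ to $0$. Then $r(t):=r\big((1-t)A'+tA'^{\top}\big)$ is strictly concave in $t$ on $(0,1)$.
   Context: A weighted circuit matrix is an $n\times n$ matrix for which there exist $k\in\{1,\dots,n\}$ distinct indices $i_1,\dots,i_k\in\{1,\dots,n\}$ such that all entries are zero except weights $c_1,\dots,c_k$ at positions $(i_1,i_2),(i_2,i_3),\dots,(i_{k-1},i_k),(i_k,i_1)$. It is a positive weighted circuit matrix if all weights are positive. $r(M)$ denotes the spectral radius of $M$. *)

theory Defs
  imports "Jordan_Normal_Form.Spectral_Radius"
begin

definition real_spectral_radius :: "real mat \<Rightarrow> real" where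
  "real_spectral_radius A = spectral_radius (map_mat complex_of_real A)"

text \<open>The n x n weighted circuit matrix with (distinct) index list
  is = [i_1,...,i_k] (0-based indices below n) and weights c 0, ..., c (k-1):
  entry c m at position (is!m, is!((m+1) mod k)), zero elsewhere.\<close>
definition circuit_mat :: "nat \<Rightarrow> nat list \<Rightarrow> (nat \<Rightarrow> real) \<Rightarrow> real mat" where
  "circuit_mat n is c = mat n n (\<lambda>(i,j).
     \<Sum>m<length is. if i = is ! m \<and> j = is ! (Suc m mod length is) then c m else 0)"

definition strictly_concave_on :: "real set \<Rightarrow> (real \<Rightarrow> real) \<Rightarrow> bool" where
  "strictly_concave_on S f \<longleftrightarrow>
     (\<forall>x\<in>S. \<forall>y\<in>S. x \<noteq> y \<longrightarrow> (\<forall>u. 0 < u \<and> u < 1 \<longrightarrow>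
        f ((1 - u) * x + u * y) > (1 - u) * f x + u * f y))"

end

theory Submission
  imports Defs
begin

lemma sqrt_concave:
  fixes x y u :: real
  assumes "0<x" "x<1" "0<y" "y<1" "x\<noteq>y" "0<u" "u<1"
  shows "(1-u) * sqrt (x*(1-x)) + u * sqrt (y*(1-y)) < sqrt (((1-u)*x+u*y)*(1-((1-u)*x+u*y)))"
proof -
  define gx where "gx = sqrt (x*(1-x))"
  define gy where "gy = sqrt (y*(1-y))"
  have gx: "gx \<ge> 0" "gx^2 = x*(1-x)" using assms unfolding gx_def by auto
  have gy: "gy \<ge> 0" "gy^2 = y*(1-y)" using assms unfolding gy_def by auto
  have "x*(1-y) - y*(1-x) = x - y" by (simp add: algebra_simps)
  hence "(x*(1-y) - y*(1-x))^2 > 0" using assms by auto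
  hence "4*(x*(1-x)*(y*(1-y))) < (x*(1-y)+y*(1-x))^2" by (simp add: power2_eq_square algebra_simps)
  hence "sqrt (4*(x*(1-x)*(y*(1-y)))) < sqrt ((x*(1-y)+y*(1-x))^2)" by (simp only: real_sqrt_less_iff)
  moreover have "sqrt (4*(x*(1-x)*(y*(1-y)))) = 2*gx*gy" unfolding gx_def gy_def
    by (simp add: real_sqrt_mult)
  moreover have "sqrt ((x*(1-y)+y*(1-x))^2) = x*(1-y)+y*(1-x)" using assms
    by (intro real_sqrt_abs[THEN trans]) (auto intro!: add_nonneg_nonneg mult_nonneg_nonneg)
  ultimately have key: "2*gx*gy < x*(1-y)+y*(1-x)" by simp
  have "((1-u)*gx + u*gy)^2 = (1-u)^2*gx^2 + u^2*gy^2 + u*(1-u)*(2*gx*gy)"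
    by (simp add: power2_eq_square algebra_simps)
  also have "\<dots> < (1-u)^2*gx^2 + u^2*gy^2 + u*(1-u)*(x*(1-y)+y*(1-x))"
    using key assms by (intro add_strict_left_mono mult_strict_left_mono) auto
  also have "\<dots> = ((1-u)*x+u*y)*(1-((1-u)*x+u*y))" unfolding gx gy
    by (simp add: power2_eq_square algebra_simps)
  finally show ?thesis unfolding gx_def[symmetric] gy_def[symmetric] by (rule real_less_rsqrt)
qed

definition tr :: "complex mat \<Rightarrow> complex" where
  "tr X = (\<Sum>i<dim_row X. X $$ (i,i))"

lemma tr_comm: assumes "X \<in> carrier_mat n m" "Y \<in> carrier_mat m n"
  shows "tr (X*Y) = tr (Y*X)"
proof -
  have "tr (X*Y) = (\<Sum>i<n. \<Sum>j<m. X$$(i,j) * Y$$(j,i))"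
    using assms unfolding tr_def by (auto simp: scalar_prod_def intro!: sum.cong simp: atLeast0LessThan)
  also have "\<dots> = (\<Sum>j<m. \<Sum>i<n. Y$$(j,i) * X$$(i,j))"
    by (subst sum.swap) (simp add: mult.commute)
  also have "\<dots> = tr (Y*X)"
    using assms unfolding tr_def by (auto simp: scalar_prod_def intro!: sum.cong simp: atLeast0LessThan)
  finally show ?thesis .
qed

lemma eig_transfer:
  fixes A B :: "complex mat"
  assumes A: "A \<in> carrier_mat n n" and B: "B \<in> carrier_mat n n"
    and d: "\<And>i. i < n \<Longrightarrow> d i \<noteq> 0" and s: "s \<noteq> 0"
    and rel: "\<And>i j. i < n \<Longrightarrow> j < n \<Longrightarrow> d i * A$$(i,j) = s * B$$(i,j) * d j"
    and ev: "eigenvalue A \<mu>"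
  shows "eigenvalue B (\<mu>/s)"
proof -
  from ev obtain v where v: "v \<in> carrier_vec n" "v \<noteq> 0\<^sub>v n" "A *\<^sub>v v = \<mu> \<cdot>\<^sub>v v"
    unfolding eigenvalue_def eigenvector_def using A by auto
  define w where "w = vec n (\<lambda>i. d i * v$i)"
  have w: "w \<in> carrier_vec n" unfolding w_def by auto
  have "w \<noteq> 0\<^sub>v n"
  proof
    assume "w = 0\<^sub>v n"
    have "v = 0\<^sub>v n"
    proof (rule eq_vecI)
      fix i assume "i < dim_vec (0\<^sub>v n)"
      hence i: "i < n" by simp
      have "w $ i = 0" using \<open>w = 0\<^sub>v n\<close> i by simp
      hence "d i * v $ i = 0" using i unfolding w_def by simp
      thus "v $ i = 0\<^sub>v n $ i" using d[OF i] i by simp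
    qed (use v in auto)
    thus False using v by auto
  qed
  moreover have "B *\<^sub>v w = (\<mu>/s) \<cdot>\<^sub>v w"
  proof (rule eq_vecI)
    fix i assume "i < dim_vec ((\<mu>/s) \<cdot>\<^sub>v w)"
    hence i: "i < n" using w by auto
    have "(B *\<^sub>v w) $ i = (\<Sum>j<n. B$$(i,j) * (d j * v$j))"
      using B i unfolding w_def by (auto simp: scalar_prod_def atLeast0LessThan intro!: sum.cong)
    also have "\<dots> = (\<Sum>j<n. d i * A$$(i,j) * v$j) / s"
      unfolding sum_divide_distrib using rel[OF i] s by (intro sum.cong) (auto simp: field_simps)
    also have "(\<Sum>j<n. d i * A$$(i,j) * v$j) = d i * (A *\<^sub>v v) $ i"
      using A i v(1) by (auto simp: scalar_prod_def atLeast0LessThan sum_distrib_left mult.assoc intro!: sum.cong)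
    also have "\<dots> = d i * \<mu> * v $ i" using v i by simp
    finally show "(B *\<^sub>v w) $ i = ((\<mu>/s) \<cdot>\<^sub>v w) $ i" using i unfolding w_def by simp
  qed (use B w in auto)
  ultimately show ?thesis unfolding eigenvalue_def eigenvector_def using B w by auto
qed

lemma sr_scale:
  fixes A B :: "complex mat"
  assumes A: "A \<in> carrier_mat n n" and B: "B \<in> carrier_mat n n" and n: "n > 0"
    and d: "\<And>i. i < n \<Longrightarrow> d i \<noteq> 0" and s: "s > 0"
    and rel: "\<And>i j. i < n \<Longrightarrow> j < n \<Longrightarrow> d i * A$$(i,j) = of_real s * B$$(i,j) * d j"
  shows "spectral_radius A = s * spectral_radius B"
proof -
  have s0: "(of_real s :: complex) \<noteq> 0" using s by simp
  have rel2: "\<And>i j. i < n \<Longrightarrow> j < n \<Longrightarrow> (1 / d i) * B$$(i,j) = (1 / of_real s) * A$$(i,j) * (1 / d j)"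
  proof -
    fix i j assume ij: "i < n" "j < n"
    from rel[OF ij] have "A$$(i,j) = of_real s * B$$(i,j) * d j / d i" using d[OF ij(1)] by (simp add: field_simps)
    thus "(1 / d i) * B$$(i,j) = (1 / of_real s) * A$$(i,j) * (1 / d j)" using d ij s0 by (simp add: field_simps)
  qed
  have "spectrum A = (\<lambda>x. of_real s * x) ` spectrum B"
  proof
    show "spectrum A \<subseteq> (\<lambda>x. of_real s * x) ` spectrum B"
    proof
      fix \<mu> assume "\<mu> \<in> spectrum A"
      hence "\<mu>/of_real s \<in> spectrum B" unfolding spectrum_def
        using eig_transfer[OF A B d s0 rel] by auto
      thus "\<mu> \<in> (\<lambda>x. of_real s * x) ` spectrum B" using s0 by (intro image_eqI[of _ _ "\<mu>/of_real s"]) auto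
    qed
    show "(\<lambda>x. of_real s * x) ` spectrum B \<subseteq> spectrum A"
    proof
      fix \<mu> assume "\<mu> \<in> (\<lambda>x. of_real s * x) ` spectrum B"
      then obtain l where l: "l \<in> spectrum B" "\<mu> = of_real s * l" by auto
      have "eigenvalue A (l / (1/of_real s))"
        using eig_transfer[OF B A, of "\<lambda>i. 1 / d i" "1/of_real s"] l(1) d s0 rel2
        unfolding spectrum_def by auto
      moreover have "l / (1/of_real s) = \<mu>" using l s0 using l(2) s0 by (simp add: field_simps)
      ultimately show "\<mu> \<in> spectrum A" unfolding spectrum_def by simp
    qed
  qed
  hence "norm ` spectrum A = (\<lambda>r. s * r) ` (norm ` spectrum B)"
    using s by (auto simp: image_image norm_mult)
  moreover have "finite (norm ` spectrum B)" using card_finite_spectrum[OF B] by auto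
  moreover have "norm ` spectrum B \<noteq> {}" using spectrum_non_empty[OF B n] by auto
  ultimately show ?thesis unfolding spectral_radius_def
    using mono_Max_commute[of "\<lambda>r. s * r" "norm ` spectrum B"] s
    by (simp add: mono_def mult_left_mono)
qed

lemma sr_pos:
  fixes B :: "complex mat"
  assumes B: "B \<in> carrier_mat n n" and n: "n > 0" and t: "tr (B*B) \<noteq> 0"
  shows "spectral_radius B > 0"
proof -
  have ge: "spectral_radius B \<ge> 0" using spectral_radius_mem_max(1)[OF B n] by auto
  { assume z: "spectral_radius B = 0"
    from char_poly_factorized[OF B] obtain es where es: "char_poly B = (\<Prod>a\<leftarrow>es. [:- a, 1:])" by auto
    obtain U P Q where sd: "schur_decomposition B es = (U,P,Q)" by (cases "schur_decomposition B es") auto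
    from schur_decomposition[OF B es sd] have sw: "similar_mat_wit B U P Q" and ut: "upper_triangular U"
      and dg: "diag_mat U = es" by auto
    from sw B have U: "U \<in> carrier_mat n n" and P: "P \<in> carrier_mat n n" and Q: "Q \<in> carrier_mat n n"
      and PQ: "P * Q = 1\<^sub>m n" and QP: "Q * P = 1\<^sub>m n" and BPUQ: "B = P * U * Q"
      unfolding similar_mat_wit_def Let_def by auto
    have e0: "e = 0" if "e \<in> set es" for e
    proof -
      have "poly (char_poly B) e = 0" unfolding es using that
        by (induct es) (auto simp: poly_prod_list)
      hence "e \<in> spectrum B" using spectrum_root_char_poly[OF B] by auto
      hence "norm e \<in> norm ` spectrum B" by (rule imageI)
      from spectral_radius_mem_max(2)[OF B n this] z have "norm e \<le> 0" by linarith
      thus "e = 0" by simp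
    qed
    have Ud: "U $$ (i,i) = 0" if "i < n" for i
      using e0[of "U $$ (i,i)"] dg that U unfolding diag_mat_def by auto
    have "B * B = P * (U * U) * Q"
    proof -
      have "B * B = P * U * (Q * P) * U * Q" unfolding BPUQ using P U Q
        by (simp add: assoc_mult_mat[of _ n n _ n _ n])
      also have "\<dots> = P * (U * U) * Q" unfolding QP using P U Q
        by (simp add: assoc_mult_mat[of _ n n _ n _ n])
      finally show ?thesis .
    qed
    note BB = this
    have QPUU: "Q * (P * (U * U)) = U * U"
    proof -
      have "Q * (P * (U * U)) = (Q * P) * (U * U)"
        by (rule assoc_mult_mat[symmetric, of _ n n _ n _ n]) (use P U Q in auto)
      also have "\<dots> = U * U" unfolding QP using U by simp
      finally show ?thesis .
    qed
    from BB have "tr (B*B) = tr (Q * (P * (U * U)))" using tr_comm[of "P * (U*U)" n n Q] P U Q by auto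
    also have "\<dots> = tr (U * U)" using QPUU by simp
    also have "\<dots> = 0"
    proof -
      have "(U*U) $$ (i,i) = 0" if i: "i < n" for i
      proof -
        have "(U*U) $$ (i,i) = (\<Sum>j<n. U$$(i,j) * U$$(j,i))"
          using U i by (auto simp: scalar_prod_def atLeast0LessThan intro!: sum.cong)
        also have "\<dots> = 0"
        proof (rule sum.neutral, intro ballI)
          fix j assume "j \<in> {..<n}"
          hence j: "j < n" by auto
          consider "j < i" | "j = i" | "i < j" by linarith
          thus "U$$(i,j) * U$$(j,i) = 0"
            using ut U i j Ud unfolding upper_triangular_def by cases auto
        qed
        finally show ?thesis .
      qed
      thus ?thesis using U by (simp add: tr_def)
    qed
    finally have False using t by simp }
  thus ?thesis using ge by fastforce
qed


lemma circ_entry: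
  assumes "distinct is" "set is \<subseteq> {..<n}" "m < length is" "j < n"
  shows "circuit_mat n is c $$ (is!m, j) = (if j = is!(Suc m mod length is) then c m else 0)"
proof -
  have im: "is!m < n" using assms nth_mem by blast
  have "circuit_mat n is c $$ (is!m, j) = (\<Sum>m'<length is. if is!m = is!m' \<and> j = is!(Suc m' mod length is) then c m' else 0)"
    unfolding circuit_mat_def using im assms(4) by simp
  also have "\<dots> = (\<Sum>m'<length is. if m' = m then (if j = is!(Suc m mod length is) then c m else 0) else 0)"
    using assms(1,3) by (intro sum.cong) (auto simp: nth_eq_iff_index_eq)
  also have "\<dots> = (if j = is!(Suc m mod length is) then c m else 0)" using assms(3) by simp
  finally show ?thesis .
qed

lemma circ_nz:
  assumes "distinct is" "set is \<subseteq> {..<n}" "i < n" "j < n" "circuit_mat n is c $$ (i,j) \<noteq> 0"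
  shows "\<exists>m<length is. i = is!m \<and> j = is!(Suc m mod length is) \<and> circuit_mat n is c $$ (i,j) = c m"
proof -
  have "(\<Sum>m'<length is. if i = is!m' \<and> j = is!(Suc m' mod length is) then c m' else 0) \<noteq> 0"
    using assms(3-5) unfolding circuit_mat_def by simp
  hence "\<exists>m. m < length is \<and> (i = is!m \<and> j = is!(Suc m mod length is))"
  proof (rule contrapos_pp)
    assume "\<not> (\<exists>m. m < length is \<and> (i = is!m \<and> j = is!(Suc m mod length is)))"
    hence "(\<Sum>m'<length is. if i = is!m' \<and> j = is!(Suc m' mod length is) then c m' else 0) = 0"
      by (intro sum.neutral) auto
    thus "\<not> (\<Sum>m'<length is. if i = is!m' \<and> j = is!(Suc m' mod length is) then c m' else 0) \<noteq> 0" by simp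
  qed
  then obtain m where m: "m < length is" "i = is!m \<and> j = is!(Suc m mod length is)" by blast
  thus ?thesis using circ_entry[OF assms(1,2) m(1) assms(4), of c] by auto
qed

lemma circ_nonneg:
  assumes "\<forall>m<length is. c m \<ge> 0" "i < n" "j < n"
  shows "circuit_mat n is c $$ (i,j) \<ge> 0"
  using assms unfolding circuit_mat_def by (auto intro!: sum_nonneg)

lemma circ_carrier: "circuit_mat n is c \<in> carrier_mat n n"
  unfolding circuit_mat_def by auto

definition pos :: "nat \<Rightarrow> nat \<Rightarrow> nat \<Rightarrow> nat" where
  "pos k m0 p = (if m0 < p then p - m0 - 1 else p + k - m0 - 1)"

lemma pos_step: assumes "m0 < k" "p < k" "p \<noteq> m0"
  shows "pos k m0 (Suc p mod k) = Suc (pos k m0 p)"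
proof (cases "Suc p < k")
  case True
  show ?thesis
  proof (cases "m0 < p")
    case True
    thus ?thesis using \<open>Suc p < k\<close> assms unfolding pos_def by simp
  next
    case False
    hence "p < m0" using assms by simp
    thus ?thesis using \<open>Suc p < k\<close> assms unfolding pos_def by simp
  qed
next
  case False hence "Suc p = k" using assms by auto
  thus ?thesis using assms unfolding pos_def by auto
qed


theorem corollary2:
  fixes n :: nat and "is" :: "nat list" and c :: "nat \<Rightarrow> real"
    and S :: "nat set" and A A' :: "real mat"
  assumes "distinct is" and "set is \<subseteq> {..<n}" and "length is \<ge> 2"
    and "\<forall>m<length is. c m > 0"
    and "A = circuit_mat n is c"
    and "S \<subseteq> {..<length is}" and "S \<noteq> {}" and "S \<noteq> {..<length is}"
    and "A' = circuit_mat n is (\<lambda>m. if m \<in> S then 0 else c m)"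
  shows "strictly_concave_on {0<..<1}
           (\<lambda>t. real_spectral_radius ((1 - t) \<cdot>\<^sub>m A' + t \<cdot>\<^sub>m transpose_mat A'))"
proof -
  note dis = assms(1) and sub = assms(2)
  define k where "k = length is"
  define c' where "c' = (\<lambda>m. if m \<in> S then 0 else c m)"
  have A': "A' = circuit_mat n is c'" using assms(9) unfolding c'_def by simp
  have A'c: "A' \<in> carrier_mat n n" unfolding A' by (rule circ_carrier)
  have k2: "k \<ge> 2" using assms(3) unfolding k_def by simp
  have "is ! 0 \<in> set is" using k2 unfolding k_def by (intro nth_mem) linarith
  hence "is ! 0 < n" using sub by blast
  hence n0: "n > 0" by simp
  have c'nn: "\<forall>m<length is. c' m \<ge> 0" using assms(4) unfolding c'_def by (auto simp: less_imp_le)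
  obtain m0 where m0: "m0 \<in> S" using assms(7) by auto
  have m0k: "m0 < k" using m0 assms(6) unfolding k_def by auto
  obtain m1 where m1: "m1 < k" "m1 \<notin> S" using assms(6,8) unfolding k_def by auto
  define B0 where "B0 = A' + transpose_mat A'"
  have B0c: "B0 \<in> carrier_mat n n" unfolding B0_def using A'c by auto
  define BC where "BC = map_mat complex_of_real B0"
  have BCc: "BC \<in> carrier_mat n n" unfolding BC_def using B0c by auto
  have Ent: "B0 $$ (i,j) = A' $$ (i,j) + A' $$ (j,i)" if "i < n" "j < n" for i j
    using that A'c unfolding B0_def by auto
  have R: "spectral_radius BC > 0"
  proof (rule sr_pos[OF BCc n0])
    define i0 where "i0 = is ! m1"
    define j0 where "j0 = is ! (Suc m1 mod k)"
    have "is ! m1 \<in> set is" using m1 unfolding k_def by (intro nth_mem) simp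
    hence i0: "i0 < n" unfolding i0_def using sub by blast
    have "Suc m1 mod k < k" using k2 by simp
    hence "is ! (Suc m1 mod k) \<in> set is" unfolding k_def by (intro nth_mem) simp
    hence j0: "j0 < n" unfolding j0_def using sub by blast
    have a0: "A' $$ (i0,j0) = c m1" unfolding A' i0_def
      using circ_entry[OF dis sub m1(1)[unfolded k_def], of j0 c'] j0 m1(2) unfolding c'_def j0_def k_def by simp
    have nnA: "A' $$ (i,j) \<ge> 0" if "i < n" "j < n" for i j
      unfolding A' using circ_nonneg[OF c'nn that] .
    have nnB: "B0 $$ (i,j) \<ge> 0" if "i < n" "j < n" for i j
      using Ent[OF that] nnA that by auto
    have "tr (BC * BC) = complex_of_real (\<Sum>i<n. \<Sum>j<n. (B0 $$ (i,j))^2)"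
    proof -
      have "tr (BC * BC) = (\<Sum>i<n. \<Sum>j<n. BC $$ (i,j) * BC $$ (j,i))"
        unfolding tr_def using BCc by (auto simp: scalar_prod_def atLeast0LessThan intro!: sum.cong)
      also have "\<dots> = (\<Sum>i<n. \<Sum>j<n. complex_of_real ((B0 $$ (i,j))^2))"
        unfolding BC_def using B0c by (auto intro!: sum.cong simp: Ent power2_eq_square add.commute)
      also have "\<dots> = complex_of_real (\<Sum>i<n. \<Sum>j<n. (B0 $$ (i,j))^2)" by (simp only: of_real_sum)
      finally show ?thesis .
    qed
    moreover have "(\<Sum>i<n. \<Sum>j<n. (B0 $$ (i,j))^2) > 0"
    proof -
      have "c m1 > 0" using assms(4) m1(1) unfolding k_def by simp
      hence "B0 $$ (i0,j0) > 0" using Ent[OF i0 j0] a0 nnA[OF j0 i0] by simp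
      hence "0 < (B0 $$ (i0,j0))^2" by simp
      also have "(B0 $$ (i0,j0))^2 \<le> (\<Sum>j<n. (B0 $$ (i0,j))^2)"
        by (rule member_le_sum) (use j0 in auto)
      also have "\<dots> \<le> (\<Sum>i<n. \<Sum>j<n. (B0 $$ (i,j))^2)"
        by (rule member_le_sum[where f="\<lambda>i. \<Sum>j<n. (B0 $$ (i,j))^2"]) (use i0 in \<open>auto intro!: sum_nonneg\<close>)
      finally show ?thesis .
    qed
    ultimately show "tr (BC * BC) \<noteq> 0" by (metis less_irrefl of_real_eq_0_iff)
  qed
  have key: "real_spectral_radius ((1 - t) \<cdot>\<^sub>m A' + t \<cdot>\<^sub>m transpose_mat A') = sqrt (t*(1-t)) * spectral_radius BC"
    if t: "0 < t" "t < 1" for t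
  proof -
    define M where "M = (1 - t) \<cdot>\<^sub>m A' + t \<cdot>\<^sub>m transpose_mat A'"
    define MC where "MC = map_mat complex_of_real M"
    have Mc: "M \<in> carrier_mat n n" unfolding M_def using A'c by auto
    have MCc: "MC \<in> carrier_mat n n" unfolding MC_def using Mc by auto
    define s where "s = sqrt (t*(1-t))"
    define \<rho> where "\<rho> = sqrt ((1-t)/t)"
    have s: "s > 0" unfolding s_def using t by simp
    have \<rho>: "\<rho> > 0" unfolding \<rho>_def using t by simp
    have s\<rho>: "s * \<rho> = 1 - t"
    proof -
      have "s * \<rho> = sqrt ((1-t)^2)" unfolding s_def \<rho>_def real_sqrt_mult[symmetric]
        using t by (simp add: power2_eq_square field_simps)
      thus ?thesis using t by simp
    qed
    have t\<rho>: "t * \<rho> = s"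
    proof -
      have "t * \<rho> = sqrt (t^2 * ((1-t)/t))" unfolding \<rho>_def real_sqrt_mult using t by simp
      thus ?thesis unfolding s_def using t by (simp add: power2_eq_square field_simps)
    qed
    define dr where "dr i = (if i \<in> set is then \<rho> ^ pos k m0 (THE p. p < k \<and> is!p = i) else 1)" for i
    have dr0: "dr i > 0" for i unfolding dr_def using \<rho> by auto
    have idx: "(THE p'. p' < k \<and> is!p' = is!p) = p" if "p < k" for p
      by (rule the_equality) (use that dis in \<open>auto simp: k_def nth_eq_iff_index_eq\<close>)
    have step: "dr (is ! (Suc p mod k)) = \<rho> * dr (is ! p)" if "p < k" "p \<notin> S" for p
    proof -
      have pk: "Suc p mod k < k" using k2 by simp
      have "p \<noteq> m0" using that m0 by auto
      hence ps: "pos k m0 (Suc p mod k) = Suc (pos k m0 p)" using pos_step[OF m0k that(1)] by simp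
      have m: "is!p \<in> set is" "is!(Suc p mod k) \<in> set is" using that(1) pk unfolding k_def by auto
      show ?thesis unfolding dr_def using m ps idx[OF that(1)] idx[OF pk] by simp
    qed
    have relr: "dr i * M $$ (i,j) = s * B0 $$ (i,j) * dr j" if ij: "i < n" "j < n" for i j
    proof -
      have h1: "dr i * ((1-t) * A' $$ (i,j)) = s * A' $$ (i,j) * dr j"
      proof (cases "A' $$ (i,j) = 0")
        case False
        from circ_nz[OF dis sub ij False[unfolded A']] obtain p where
          p: "p < k" "i = is!p" "j = is!(Suc p mod k)" "A' $$ (i,j) = c' p" unfolding k_def A' by auto
        have "p \<notin> S" using p(4) False unfolding c'_def by auto
        from step[OF p(1) this] p(2,3) have "dr j = \<rho> * dr i" by simp
        thus ?thesis unfolding s\<rho>[symmetric] by (simp add: algebra_simps)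
      qed simp
      have h2: "dr i * (t * A' $$ (j,i)) = s * A' $$ (j,i) * dr j"
      proof (cases "A' $$ (j,i) = 0")
        case False
        from circ_nz[OF dis sub ij(2,1) False[unfolded A']] obtain p where
          p: "p < k" "j = is!p" "i = is!(Suc p mod k)" "A' $$ (j,i) = c' p" unfolding k_def A' by auto
        have "p \<notin> S" using p(4) False unfolding c'_def by auto
        from step[OF p(1) this] p(2,3) have "dr i = \<rho> * dr j" by simp
        thus ?thesis unfolding t\<rho>[symmetric] by (simp add: algebra_simps)
      qed simp
      have Mij: "M $$ (i,j) = (1-t) * A' $$ (i,j) + t * A' $$ (j,i)"
        unfolding M_def using ij A'c by simp
      have "dr i * M $$ (i,j) = dr i * ((1-t) * A' $$ (i,j)) + dr i * (t * A' $$ (j,i))"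
        unfolding Mij by (rule distrib_left)
      also have "\<dots> = s * A' $$ (i,j) * dr j + s * A' $$ (j,i) * dr j" by (simp only: h1 h2)
      also have "\<dots> = s * B0 $$ (i,j) * dr j" unfolding Ent[OF ij] by (simp add: algebra_simps)
      finally show ?thesis .
    qed
    have "spectral_radius MC = s * spectral_radius BC"
    proof (rule sr_scale[OF MCc BCc n0, of "\<lambda>i. complex_of_real (dr i)"])
      show "complex_of_real (dr i) \<noteq> 0" for i using dr0[of i] by simp
      show "0 < s" by fact
      fix i j assume ij: "i < n" "j < n"
      have "complex_of_real (dr i) * MC $$ (i, j) = complex_of_real (dr i * M $$ (i,j))"
        unfolding MC_def using ij Mc by simp
      also have "\<dots> = complex_of_real (s * B0 $$ (i,j) * dr j)" using relr[OF ij] by simp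
      also have "\<dots> = complex_of_real s * BC $$ (i, j) * complex_of_real (dr j)"
        unfolding BC_def using ij B0c by simp
      finally show "complex_of_real (dr i) * MC $$ (i, j) = complex_of_real s * BC $$ (i, j) * complex_of_real (dr j)" .
    qed
    thus ?thesis unfolding real_spectral_radius_def MC_def M_def s_def .
  qed
  show ?thesis unfolding strictly_concave_on_def
  proof (intro ballI allI impI)
    fix x y and u :: real assume x: "x \<in> {0<..<1::real}" and y: "y \<in> {0<..<1::real}" and xy: "x \<noteq> y"
      and u: "0 < u \<and> u < 1"
    define z where "z = (1-u)*x + u*y"
    have "(1-u)*x < (1-u)*1" using x u by (intro mult_strict_left_mono) auto
    hence "(1-u)*x < 1-u" by simp
    moreover have "u*y < u*1" using y u by (intro mult_strict_left_mono) auto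
    hence "u*y < u" by simp
    moreover have "0 < (1-u)*x + u*y" using x y u by (intro add_pos_pos mult_pos_pos) auto
    ultimately have z: "0 < z" "z < 1" unfolding z_def by linarith+
    have "(1-u) * sqrt (x*(1-x)) + u * sqrt (y*(1-y)) < sqrt (z*(1-z))"
      unfolding z_def using sqrt_concave[of x y u] x y xy u by auto
    hence "((1-u) * sqrt (x*(1-x)) + u * sqrt (y*(1-y))) * spectral_radius BC < sqrt (z*(1-z)) * spectral_radius BC"
      using R by simp
    thus "(1 - u) * real_spectral_radius ((1 - x) \<cdot>\<^sub>m A' + x \<cdot>\<^sub>m transpose_mat A') +
          u * real_spectral_radius ((1 - y) \<cdot>\<^sub>m A' + y \<cdot>\<^sub>m transpose_mat A')
          < real_spectral_radius ((1 - ((1 - u) * x + u * y)) \<cdot>\<^sub>m A' + ((1 - u) * x + u * y) \<cdot>\<^sub>m transpose_mat A')"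
      using key[of x] key[of y] key[of z] x y z unfolding z_def by (simp add: algebra_simps)
  qed
qed

end
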